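(* For every $n\ge2$, consider all plane trees on $n$ vertices and, in each, all pairs $(u,\ell)$ with $\ell$ a leaf that is a proper descendant of the vertex $u$. Then: - the total number of such pairs is $4^{n-2}$; - the total of $d(u,\ell)$ over all such pairs is $\frac{(2n-3)!}{2((n-2)!)^2}+\frac{4^{n-2}}{2}$. Hence the expected length of such a path, chosen uniformly, is $$\frac{(2n-3)!!}{2\,(2n-4)!!}+\frac12=\sqrt{\frac n\pi}+\frac12+O\Bigl(\frac1{\sqrt n}\Bigr).$$
   Context: General (plane) trees are rooted trees in which each vertex may have any number of children, linearly ordered. The size of a tree is its number of vertices, and a leaf is a vertex with no children. $d(u,w)$ is the number of edges of the path between $u$ and $w$. The double factorials are $(2m)!!=2\cdot4\cdots(2m)$ and $(2m-1)!!=1\cdot3\cdots(2m-1)$, with $0!!=1$. *)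

theory Defs
  imports "HOL-Analysis.Analysis" "HOL-Library.Landau_Symbols" "HOL-Library.Sublist"
begin

datatype ptree = Node "ptree list"

text \<open>Vertices of a plane tree, addressed by their path from the root:
  the root is [], and the j-th child (0-based) of vertex p is p @ [j].\<close>
function positions :: "ptree \<Rightarrow> nat list set" where
  "positions (Node ts) =
     insert [] (\<Union>(i, s) \<in> set (zip [0..<length ts] ts). (Cons i) ` positions s)"
  by pat_completeness auto
termination
proof (relation "Wellfounded.measure size")
  fix ts and x :: "nat \<times> ptree" and i s
  assume "x \<in> set (zip [0..<length ts] ts)" "(i, s) = x"
  then have "s \<in> set ts" by (auto dest: set_zip_rightD)
  then have "size s \<le> size_list size ts" by (rule size_list_estimation') simp
  then show "(s, Node ts) \<in> Wellfounded.measure size" by simp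
qed simp

definition tsize :: "ptree \<Rightarrow> nat" where
  "tsize t = card (positions t)"

text \<open>A leaf is a vertex without children (i.e. it has no first child).\<close>
definition is_leaf :: "ptree \<Rightarrow> nat list \<Rightarrow> bool" where
  "is_leaf t p \<longleftrightarrow> p \<in> positions t \<and> p @ [0] \<notin> positions t"

definition proper_desc :: "nat list \<Rightarrow> nat list \<Rightarrow> bool" where
  "proper_desc u w \<longleftrightarrow> strict_prefix u w"

definition anc_leaf_pairs :: "ptree \<Rightarrow> (nat list \<times> nat list) set" where
  "anc_leaf_pairs t = {(u, l). u \<in> positions t \<and> is_leaf t l \<and> proper_desc u l}"

definition tdist :: "nat list \<Rightarrow> nat list \<Rightarrow> nat" where
  "tdist u w = length w - length u"

definition trees_of_size :: "nat \<Rightarrow> ptree set" where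
  "trees_of_size n = {t. tsize t = n}"

fun dfact :: "nat \<Rightarrow> nat" where
  "dfact 0 = 1"
| "dfact (Suc 0) = 1"
| "dfact (Suc (Suc n)) = Suc (Suc n) * dfact n"

end

theory Submission
  imports Defs "HOL-Computational_Algebra.Formal_Power_Series" "HOL-Real_Asymp.Real_Asymp"
begin

unbundle no vec_syntax
unbundle fps_syntax

lemma positions_alt: "positions (Node ts) = insert [] (\<Union>i<length ts. Cons i ` positions (ts!i))"
  by (auto simp: set_zip)

lemma mem_pos_Cons: "i # q \<in> positions (Node ts) \<longleftrightarrow> i < length ts \<and> q \<in> positions (ts!i)"
  unfolding positions_alt by auto

lemma nil_pos[simp]: "[] \<in> positions t"
  by (cases t) simp

lemma finite_positions[simp]: "finite (positions t)"
proof (induction t)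
  case (Node ts)
  then show ?case unfolding positions_alt by auto
qed

fun kids :: "ptree \<Rightarrow> ptree list" where "kids (Node ts) = ts"
definition join :: "ptree \<Rightarrow> ptree \<Rightarrow> ptree" where "join c r = Node (c # kids r)"
fun shift :: "nat list \<Rightarrow> nat list" where
  "shift [] = []" | "shift (i # q) = Suc i # q"

lemma Node_kids[simp]: "Node (kids r) = r" by (cases r) auto

lemma mem_pos_join: "p \<in> positions (join c r) \<longleftrightarrow>
   p = [] \<or> (\<exists>q. p = 0 # q \<and> q \<in> positions c) \<or> (\<exists>i q. p = Suc i # q \<and> i # q \<in> positions r)"
proof (cases p)
  case Nil then show ?thesis by (simp add: join_def)
next
  case (Cons i q)
  have "i#q \<in> positions (join c r) \<longleftrightarrow> i < Suc (length (kids r)) \<and> q \<in> positions ((c # kids r)!i)"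
    unfolding join_def by (subst mem_pos_Cons) simp
  also have "\<dots> \<longleftrightarrow> (i = 0 \<and> q \<in> positions c) \<or> (\<exists>j. i = Suc j \<and> j # q \<in> positions r)"
    by (cases i) (auto simp: mem_pos_Cons[of _ _ "kids r", simplified])
  finally show ?thesis using Cons by auto
qed

lemma pos_join: "positions (join c r) = insert [] (Cons 0 ` positions c \<union> shift ` (positions r - {[]}))"
proof -
  have "p \<in> shift ` (positions r - {[]}) \<longleftrightarrow> (\<exists>i q. p = Suc i # q \<and> i # q \<in> positions r)" for p
  proof
    assume "p \<in> shift ` (positions r - {[]})"
    then obtain x where "x \<in> positions r" "x \<noteq> []" "p = shift x" by auto
    then show "\<exists>i q. p = Suc i # q \<and> i # q \<in> positions r" by (cases x) auto
  next
    assume "\<exists>i q. p = Suc i # q \<and> i # q \<in> positions r"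
    then obtain i q where "p = Suc i # q" "i # q \<in> positions r" by auto
    then show "p \<in> shift ` (positions r - {[]})" by (intro image_eqI[of _ _ "i#q"]) auto
  qed
  moreover have "p \<in> Cons 0 ` A \<longleftrightarrow> (\<exists>q. p = 0 # q \<and> q \<in> A)" for p A by auto
  ultimately show ?thesis unfolding set_eq_iff mem_pos_join insert_iff Un_iff by blast
qed

lemma inj_shift: "inj_on shift (A - {[]})"
proof (rule inj_onI)
  fix x y assume "x \<in> A - {[]}" "y \<in> A - {[]}" "shift x = shift y"
  then show "x = y" by (cases x; cases y) auto
qed

lemma length_shift[simp]: "length (shift p) = length p" by (cases p) auto

lemma tsize_pos0: "card (positions t) \<ge> 1"
proof -
  have "positions t \<noteq> {}" using nil_pos by blast
  then show ?thesis using card_gt_0_iff[of "positions t"] by simp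
qed

lemma tsize_pos: "tsize t \<ge> 1"
  unfolding tsize_def by (rule tsize_pos0)

lemma tsize_join: "tsize (join c r) = tsize c + tsize r"
proof -
  have d1: "Cons 0 ` positions c \<inter> shift ` (positions r - {[]}) = {}"
  proof (rule equals0I)
    fix p assume "p \<in> Cons 0 ` positions c \<inter> shift ` (positions r - {[]})"
    then obtain q x where "p = 0#q" "x \<noteq> []" "p = shift x" by blast
    then show False by (cases x) auto
  qed
  have f: "finite (Cons 0 ` positions c \<union> shift ` (positions r - {[]}))" by simp
  have nn: "[] \<notin> Cons 0 ` positions c \<union> shift ` (positions r - {[]})"
  proof
    assume "[] \<in> Cons 0 ` positions c \<union> shift ` (positions r - {[]})"
    then obtain x where "x \<noteq> []" "[] = shift x" by blast
    then show False by (cases x) auto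
  qed
  have c1: "card (Cons 0 ` positions c) = card (positions c)"
    by (rule card_image) (rule inj_onI, simp)
  have c2: "card (shift ` (positions r - {[]})) = card (positions r - {[]})"
    by (rule card_image) (rule inj_shift)
  have c3: "card (positions r - {[]}) = card (positions r) - 1"
    by (rule card_Diff_singleton) simp
  have c4: "card (positions r) \<ge> 1"
    using tsize_pos0[of r] by simp
  have "card (positions (join c r)) = Suc (card (Cons 0 ` positions c \<union> shift ` (positions r - {[]})))"
    unfolding pos_join using f nn by (rule card_insert_disjoint)
  also have "\<dots> = Suc (card (Cons 0 ` positions c) + card (shift ` (positions r - {[]})))"
    using d1 by (subst card_Un_disjoint) simp_all
  also have "\<dots> = card (positions c) + card (positions r)"
    using c1 c2 c3 c4 by simp
  finally show ?thesis by (simp add: tsize_def)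
qed

lemma tsize_leaf[simp]: "tsize (Node []) = 1"
  by (simp add: tsize_def)

lemma tree_cases: obtains "t = Node []" | c r where "t = join c r"
proof (cases t)
  case (Node ts)
  show ?thesis
  proof (cases ts)
    case Nil then show ?thesis using that Node by simp
  next
    case (Cons a list) then show ?thesis using that(2)[of a "Node list"] Node by (simp add: join_def)
  qed
qed

lemma join_inj: "join c r = join c' r' \<longleftrightarrow> c = c' \<and> r = r'"
  unfolding join_def by (metis Node_kids list.inject ptree.inject)

lemma join_ne_leaf[simp]: "join c r \<noteq> Node []" by (simp add: join_def)

lemma T0: "trees_of_size 0 = {}"
proof -
  have "tsize t \<noteq> 0" for t using tsize_pos[of t] by linarith
  then show ?thesis by (auto simp: trees_of_size_def)
qed

lemma T1: "trees_of_size (Suc 0) = {Node []}"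
proof -
  have "t = Node []" if "tsize t = 1" for t
  proof (cases t rule: tree_cases)
    case (2 c r)
    then show ?thesis using that tsize_pos[of c] tsize_pos[of r] by (simp add: tsize_join)
  qed
  then show ?thesis by (auto simp: trees_of_size_def)
qed

definition W :: "nat \<Rightarrow> (nat \<times> ptree \<times> ptree) set" where
  "W n = (SIGMA k:{1..<n}. trees_of_size k \<times> trees_of_size (n - k))"

lemma T_ge2: assumes "n \<ge> 2"
  shows "trees_of_size n = (\<lambda>(k, c, r). join c r) ` W n"
proof
  show "trees_of_size n \<subseteq> (\<lambda>(k, c, r). join c r) ` W n"
  proof
    fix t assume t: "t \<in> trees_of_size n"
    show "t \<in> (\<lambda>(k, c, r). join c r) ` W n"
    proof (cases t rule: tree_cases)
      case 1 then show ?thesis using t assms by (simp add: trees_of_size_def)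
    next
      case (2 c r)
      then have "tsize c + tsize r = n" using t by (simp add: trees_of_size_def tsize_join)
      then have "(tsize c, c, r) \<in> W n" using tsize_pos[of c] tsize_pos[of r]
        by (auto simp: W_def trees_of_size_def)
      then show ?thesis using 2 by force
    qed
  qed
next
  show "(\<lambda>(k, c, r). join c r) ` W n \<subseteq> trees_of_size n"
    by (auto simp: W_def trees_of_size_def tsize_join)
qed

lemma finite_T: "finite (trees_of_size n)"
proof (induction n rule: less_induct)
  case (less n)
  show ?case
  proof (cases "n \<ge> 2")
    case True
    have "finite (W n)" unfolding W_def using less by (intro finite_SigmaI) auto
    then show ?thesis using T_ge2[OF True] by simp
  next
    case False
    then have "n = 0 \<or> n = 1" by auto
    then show ?thesis using T0 T1 by auto
  qed
qed

lemma sum_T_ge2: assumes "n \<ge> 2"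
  shows "(\<Sum>t\<in>trees_of_size n. F t) =
    (\<Sum>k\<in>{1..<n}. \<Sum>c\<in>trees_of_size k. \<Sum>r\<in>trees_of_size (n-k). F (join c r))"
proof -
  have inj: "inj_on (\<lambda>(k, c, r). join c r) (W n)"
    by (rule inj_onI) (auto simp: W_def join_inj trees_of_size_def)
  have "(\<Sum>t\<in>trees_of_size n. F t) = (\<Sum>x\<in>W n. F ((\<lambda>(k, c, r). join c r) x))"
    unfolding T_ge2[OF assms] by (subst sum.reindex[OF inj]) simp
  also have "\<dots> = (\<Sum>(k,cr)\<in>W n. F (join (fst cr) (snd cr)))"
    by (intro sum.cong) auto
  also have "\<dots> = (\<Sum>k\<in>{1..<n}. \<Sum>cr\<in>trees_of_size k \<times> trees_of_size (n - k). F (join (fst cr) (snd cr)))"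
    unfolding W_def by (rule sum.Sigma[symmetric]) (auto simp: finite_T)
  also have "\<dots> = (\<Sum>k\<in>{1..<n}. \<Sum>c\<in>trees_of_size k. \<Sum>r\<in>trees_of_size (n-k). F (join c r))"
    by (simp add: sum.cartesian_product split_def)
  finally show ?thesis .
qed

definition leaves :: "ptree \<Rightarrow> nat list set" where "leaves t = {p. is_leaf t p}"

lemma finite_leaves[simp]: "finite (leaves t)"
  by (rule finite_subset[of _ "positions t"]) (auto simp: leaves_def is_leaf_def)

lemma leaves_leaf: "leaves (Node []) = {[]}"
  by (auto simp: leaves_def is_leaf_def)

lemma mem_shift_img: "p \<in> shift ` (A - {[]}) \<longleftrightarrow> (\<exists>i q. p = Suc i # q \<and> i # q \<in> A)"
proof
  assume "p \<in> shift ` (A - {[]})"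
  then obtain x where "x \<in> A" "x \<noteq> []" "p = shift x" by blast
  then show "\<exists>i q. p = Suc i # q \<and> i # q \<in> A" by (cases x) auto
next
  assume "\<exists>i q. p = Suc i # q \<and> i # q \<in> A"
  then obtain i q where "p = Suc i # q" "i # q \<in> A" by blast
  then show "p \<in> shift ` (A - {[]})" by (intro image_eqI[of _ _ "i#q"]) auto
qed

lemma leaves_join: "leaves (join c r) = Cons 0 ` leaves c \<union> shift ` (leaves r - {[]})"
proof (rule set_eqI)
  fix p
  show "p \<in> leaves (join c r) \<longleftrightarrow> p \<in> Cons 0 ` leaves c \<union> shift ` (leaves r - {[]})"
  proof (cases p)
    case Nil
    have "[0] \<in> positions (join c r)" unfolding mem_pos_join by simp
    then show ?thesis using Nil by (auto simp: leaves_def is_leaf_def mem_shift_img)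
  next
    case (Cons i q)
    show ?thesis
    proof (cases i)
      case 0
      then show ?thesis using Cons
        by (auto simp: leaves_def is_leaf_def mem_shift_img mem_pos_join)
    next
      case (Suc j)
      then show ?thesis using Cons
        by (auto simp: leaves_def is_leaf_def mem_shift_img mem_pos_join)
    qed
  qed
qed

lemma nil_leaf_iff: "[] \<in> leaves r \<longleftrightarrow> kids r = []"
proof -
  have "[0] \<in> positions r \<longleftrightarrow> 0 < length (kids r)"
    using mem_pos_Cons[of 0 "[]" "kids r"] by simp
  then show ?thesis by (auto simp: leaves_def is_leaf_def)
qed

definition S :: "(nat \<Rightarrow> real) \<Rightarrow> ptree \<Rightarrow> real" where
  "S g t = (\<Sum>p\<in>leaves t. g (length p))"

lemma S_leaf: "S g (Node []) = g 0"
  by (simp add: S_def leaves_leaf)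

lemma S_join: "S g (join c r) = S (\<lambda>d. g (Suc d)) c + S g r - (if kids r = [] then g 0 else 0)"
proof -
  have d1: "Cons 0 ` leaves c \<inter> shift ` (leaves r - {[]}) = {}"
  proof (rule equals0I)
    fix p assume "p \<in> Cons 0 ` leaves c \<inter> shift ` (leaves r - {[]})"
    then have "p \<in> Cons 0 ` leaves c" "p \<in> shift ` (leaves r - {[]})" by blast+
    then show False unfolding mem_shift_img by auto
  qed
  have i1: "inj_on (Cons 0) (leaves c)" by (rule inj_onI) simp
  have "S g (join c r) = (\<Sum>p\<in>Cons 0 ` leaves c. g (length p)) + (\<Sum>p\<in>shift ` (leaves r - {[]}). g (length p))"
    unfolding S_def leaves_join using d1 by (rule sum.union_disjoint[rotated 2]) simp_all
  also have "(\<Sum>p\<in>Cons 0 ` leaves c. g (length p)) = S (\<lambda>d. g (Suc d)) c"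
    unfolding S_def by (subst sum.reindex[OF i1]) simp
  also have "(\<Sum>p\<in>shift ` (leaves r - {[]}). g (length p)) = (\<Sum>p\<in>leaves r - {[]}. g (length p))"
    by (subst sum.reindex[OF inj_shift]) simp
  also have "\<dots> = S g r - (if kids r = [] then g 0 else 0)"
    unfolding S_def by (subst sum_diff1) (auto simp: nil_leaf_iff)
  finally show ?thesis by simp
qed

lemma S_add: "S (\<lambda>d. g1 d + g2 d) t = S g1 t + S g2 t"
  by (simp add: S_def sum.distrib)

lemma S_const: "S (\<lambda>d. a * g d) t = a * S g t"
  by (simp add: S_def sum_distrib_left)

lemma pos_prefix: "q @ s \<in> positions t \<Longrightarrow> q \<in> positions t"
proof (induction q arbitrary: t)
  case Nil then show ?case by simp
next
  case (Cons i q)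
  obtain ts where t: "t = Node ts" by (cases t)
  from Cons.prems have "i < length ts" "q @ s \<in> positions (ts!i)"
    unfolding t append_Cons mem_pos_Cons by simp_all
  then show ?case using Cons.IH unfolding t mem_pos_Cons by simp
qed

lemma ALP_eq: "anc_leaf_pairs t = (\<lambda>(l, u). (u, l)) ` (SIGMA l:leaves t. {u. strict_prefix u l})"
proof -
  have "u \<in> positions t" if "strict_prefix u l" "l \<in> leaves t" for u l
    using that by (auto simp: leaves_def is_leaf_def strict_prefix_def prefix_def intro: pos_prefix)
  then show ?thesis by (auto simp: anc_leaf_pairs_def leaves_def proper_desc_def)
qed

lemma strict_prefix_set: "{u. strict_prefix u l} = (\<lambda>k. take k l) ` {..<length l}"
proof (rule set_eqI)
  fix u
  show "u \<in> {u. strict_prefix u l} \<longleftrightarrow> u \<in> (\<lambda>k. take k l) ` {..<length l}"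
  proof
    assume "u \<in> {u. strict_prefix u l}"
    then have "prefix u l" "length u < length l" by (auto simp: strict_prefix_def prefix_length_less)
    then show "u \<in> (\<lambda>k. take k l) ` {..<length l}"
      by (intro image_eqI[of _ _ "length u"]) (auto simp: prefix_def)
  next
    assume "u \<in> (\<lambda>k. take k l) ` {..<length l}"
    then obtain k where "k < length l" "u = take k l" by auto
    then show "u \<in> {u. strict_prefix u l}"
      by (auto simp: strict_prefix_def take_is_prefix)
  qed
qed

lemma sum_ALP: "(\<Sum>(u, l)\<in>anc_leaf_pairs t. f u l) = (\<Sum>l\<in>leaves t. \<Sum>k<length l. f (take k l) l)"
proof -
  have inj: "inj_on (\<lambda>(l, u). (u, l)) X" for X :: "(nat list \<times> nat list) set"
    by (rule inj_onI) auto
  have fin: "finite {u. strict_prefix u l}" for l :: "nat list"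
    unfolding strict_prefix_set by simp
  have injt: "inj_on (\<lambda>k. take k l) {..<length l}" for l :: "nat list"
    by (rule inj_onI) (metis lessThan_iff length_take min.absorb4 less_imp_le)
  have "(\<Sum>(u, l)\<in>anc_leaf_pairs t. f u l) = (\<Sum>(l, u)\<in>(SIGMA l:leaves t. {u. strict_prefix u l}). f u l)"
    unfolding ALP_eq by (subst sum.reindex[OF inj]) (simp add: comp_def split_def)
  also have "\<dots> = (\<Sum>l\<in>leaves t. \<Sum>u\<in>{u. strict_prefix u l}. f u l)"
    by (rule sum.Sigma[symmetric]) (auto simp: fin)
  also have "\<dots> = (\<Sum>l\<in>leaves t. \<Sum>k<length l. f (take k l) l)"
    unfolding strict_prefix_set by (intro sum.cong refl, subst sum.reindex[OF injt]) simp
  finally show ?thesis .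
qed

lemma card_ALP: "real (card (anc_leaf_pairs t)) = S real t"
proof -
  have "card (anc_leaf_pairs t) = (\<Sum>(u, l)\<in>anc_leaf_pairs t. (1::nat))" by simp
  also have "\<dots> = (\<Sum>l\<in>leaves t. length l)" by (subst sum_ALP) simp
  finally show ?thesis by (simp add: S_def)
qed

lemma tri_sum: "2 * (\<Sum>k<n. n - k) = n * (n + 1::nat)"
proof (induction n)
  case 0 then show ?case by simp
next
  case (Suc n)
  have "(\<Sum>k<n. Suc n - k) = (\<Sum>k<n. (n - k) + 1)"
    by (rule sum.cong) auto
  also have "\<dots> = (\<Sum>k<n. n - k) + n" unfolding sum.distrib by simp
  finally have "(\<Sum>k<n. Suc n - k) = (\<Sum>k<n. n - k) + n" .
  then show ?case using Suc by (simp add: algebra_simps)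
qed

lemma dist_ALP: "real (\<Sum>(u, l)\<in>anc_leaf_pairs t. tdist u l) = S (\<lambda>d. real d * (real d + 1) / 2) t"
proof -
  have e: "(\<Sum>(u, l)\<in>anc_leaf_pairs t. tdist u l) = (\<Sum>l\<in>leaves t. \<Sum>k<length l. length l - k)"
    by (subst sum_ALP) (simp add: tdist_def)
  have h: "real (\<Sum>k<n. n - k) = real n * (real n + 1) / 2" for n
  proof -
    define A where "A = (\<Sum>k<n. n - k)"
    have "2 * A = n * (n + 1)" unfolding A_def by (rule tri_sum)
    then have "real (2 * A) = real (n * (n + 1))" by (simp only:)
    then have "2 * real A = real n * (real n + 1)" by (simp only: of_nat_mult of_nat_add of_nat_numeral of_nat_1)
    moreover have "real n * (real n + 1) = real n * real n + real n" by (simp add: distrib_left)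
    ultimately show ?thesis unfolding A_def[symmetric] by linarith
  qed
  have "real (\<Sum>(u, l)\<in>anc_leaf_pairs t. tdist u l) = (\<Sum>l\<in>leaves t. real (\<Sum>k<length l. length l - k))"
    unfolding e by (rule of_nat_sum)
  also have "\<dots> = S (\<lambda>d. real d * (real d + 1) / 2) t"
    unfolding S_def by (rule sum.cong[OF refl]) (rule h)
  finally show ?thesis .
qed

definition ser :: "(ptree \<Rightarrow> real) \<Rightarrow> real fps" where
  "ser F = Abs_fps (\<lambda>n. \<Sum>t\<in>trees_of_size n. F t)"

lemma ser_nth: "ser F $ n = (\<Sum>t\<in>trees_of_size n. F t)" by (simp add: ser_def)

lemma ser_nth0[simp]: "ser F $ 0 = 0" by (simp add: ser_def T0)

lemma mult_nth_01:
  fixes f g :: "real fps"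
  assumes "f $ 0 = 0" "g $ 0 = 0"
  shows "(f * g) $ n = (\<Sum>i\<in>{1..<n}. f $ i * g $ (n - i))"
proof (cases "n = 0")
  case True then show ?thesis using assms by (simp add: fps_mult_nth)
next
  case False
  have "(f * g) $ n = (\<Sum>i\<in>{0..n}. f $ i * g $ (n - i))" by (simp add: fps_mult_nth)
  also have "{0..n} = insert 0 (insert n {1..<n})" using False by auto
  also have "(\<Sum>i\<in>insert 0 (insert n {1..<n}). f $ i * g $ (n - i)) = (\<Sum>i\<in>{1..<n}. f $ i * g $ (n - i))"
    using assms False by (simp add: sum.insert_if)
  finally show ?thesis .
qed

lemma ser_rec:
  assumes "\<And>c r. F (join c r) = G1 c * K1 r + G2 c * K2 r"
  shows "ser F = fps_const (F (Node [])) * fps_X + ser G1 * ser K1 + ser G2 * ser K2"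
proof (rule fps_ext)
  fix n
  show "ser F $ n = (fps_const (F (Node [])) * fps_X + ser G1 * ser K1 + ser G2 * ser K2) $ n"
  proof (cases "n \<ge> 2")
    case True
    have "ser F $ n = (\<Sum>k\<in>{1..<n}. \<Sum>c\<in>trees_of_size k. \<Sum>r\<in>trees_of_size (n-k). G1 c * K1 r + G2 c * K2 r)"
      unfolding ser_nth sum_T_ge2[OF True] assms ..
    also have "\<dots> = (\<Sum>k\<in>{1..<n}. ser G1 $ k * ser K1 $ (n - k) + ser G2 $ k * ser K2 $ (n - k))"
      by (simp add: ser_nth sum.distrib sum_product)
    also have "\<dots> = (fps_const (F (Node [])) * fps_X + ser G1 * ser K1 + ser G2 * ser K2) $ n"
      using True by (simp add: mult_nth_01 sum.distrib)
    finally show ?thesis .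
  next
    case False
    then have "n = 0 \<or> n = 1" by auto
    then show ?thesis
    proof
      assume "n = 0" then show ?thesis by (simp add: fps_mult_nth)
    next
      assume n: "n = 1"
      have "ser F $ 1 = F (Node [])" by (simp add: ser_nth T1)
      moreover have "(ser G1 * ser K1) $ 1 = 0" "(ser G2 * ser K2) $ 1 = 0"
        by (simp_all add: mult_nth_01)
      ultimately show ?thesis using n by simp
    qed
  qed
qed

lemma ser_add: "ser (\<lambda>t. F t + G t) = ser F + ser G"
  by (rule fps_ext) (simp add: ser_nth sum.distrib)

lemma ser_diff: "ser (\<lambda>t. F t - G t) = ser F - ser G"
  by (rule fps_ext) (simp add: ser_nth sum_subtractf)

lemma ser_E: "ser (\<lambda>r. if kids r = [] then 1 else 0) = fps_X"
proof (rule fps_ext)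
  fix n
  show "ser (\<lambda>r. if kids r = [] then 1 else 0) $ n = fps_X $ n"
  proof (cases "n \<ge> 2")
    case True
    have "kids t \<noteq> []" if "t \<in> trees_of_size n" for t
    proof
      assume "kids t = []"
      then have "t = Node []" by (metis Node_kids)
      then show False using that True by (simp add: trees_of_size_def)
    qed
    then show ?thesis using True by (simp add: ser_nth)
  next
    case False
    then have "n = 0 \<or> n = 1" by auto
    then show ?thesis by (auto simp: ser_nth T0 T1)
  qed
qed

definition cat :: "real fps" where "cat = ser (\<lambda>_. 1)"
definition L1 :: "real fps" where "L1 = ser (S (\<lambda>_. 1))"
definition HH :: "real fps" where "HH = ser (S real)"
definition DD :: "real fps" where "DD = ser (S (\<lambda>d. real d * (real d + 1) / 2))"

lemma ser_zero: "ser (\<lambda>_. 0) = 0" by (rule fps_ext) (simp add: ser_nth)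

lemma cat_eq: "cat = fps_X + cat * cat"
proof -
  have "ser (\<lambda>_. 1) = fps_const 1 * fps_X + ser (\<lambda>_. 1) * ser (\<lambda>_. 1) + ser (\<lambda>_. 0) * ser (\<lambda>_. 0)"
    by (rule ser_rec) simp
  then show ?thesis by (simp add: cat_def ser_zero)
qed

lemma L1_eq: "L1 = fps_X + L1 * cat + cat * (L1 - fps_X)"
proof -
  have "ser (S (\<lambda>_. 1)) = fps_const (S (\<lambda>_. 1) (Node [])) * fps_X + ser (S (\<lambda>_. 1)) * ser (\<lambda>_. 1)
     + ser (\<lambda>_. 1) * ser (\<lambda>r. S (\<lambda>_. 1) r - (if kids r = [] then 1 else 0))"
    by (rule ser_rec) (simp add: S_join)
  then show ?thesis by (simp add: L1_def cat_def ser_diff ser_E S_leaf)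
qed

lemma HH_eq: "HH = (HH + L1) * cat + cat * HH"
proof -
  have "ser (S real) = fps_const (S real (Node [])) * fps_X + ser (\<lambda>t. S real t + S (\<lambda>_. 1) t) * ser (\<lambda>_. 1)
     + ser (\<lambda>_. 1) * ser (S real)"
  proof (rule ser_rec)
    fix c r
    have h1: "S (\<lambda>d. real (Suc d)) c = S real c + S (\<lambda>_. 1) c"
      unfolding S_def of_nat_Suc by (simp add: sum.distrib add.commute)
    show "S real (join c r) = (S real c + S (\<lambda>_. 1) c) * 1 + 1 * S real r"
      unfolding S_join h1 by simp
  qed
  then show ?thesis by (simp add: HH_def L1_def cat_def ser_add S_leaf)
qed

lemma DD_eq: "DD = (DD + HH + L1) * cat + cat * DD"
proof -
  let ?g = "\<lambda>d. real d * (real d + 1) / 2"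
  have g: "?g (Suc d) = ?g d + real d + 1" for d by (simp add: field_simps)
  have "ser (S ?g) = fps_const (S ?g (Node [])) * fps_X + ser (\<lambda>t. S ?g t + S real t + S (\<lambda>_. 1) t) * ser (\<lambda>_. 1)
     + ser (\<lambda>_. 1) * ser (S ?g)"
  proof (rule ser_rec)
    fix c r
    have h1: "S (\<lambda>d. ?g (Suc d)) c = S (\<lambda>d. ?g d + real d + 1) c"
      by (simp only: g)
    also have "\<dots> = S ?g c + S real c + S (\<lambda>_. 1) c"
      unfolding S_def by (simp add: sum.distrib)
    finally have h2: "S (\<lambda>d. ?g (Suc d)) c = S ?g c + S real c + S (\<lambda>_. 1) c" .
    show "S ?g (join c r) = (S ?g c + S real c + S (\<lambda>_. 1) c) * 1 + 1 * S ?g r"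
      unfolding S_join h2 by simp
  qed
  then show ?thesis by (simp add: HH_def L1_def DD_def cat_def ser_add S_leaf)
qed

abbreviation b :: "nat \<Rightarrow> real" where "b k \<equiv> real ((2*k) choose k)"

lemma bsuc: "b (Suc k) = b k * (2 * (2 * real k + 1)) / (real k + 1)"
proof -
  define C1 where "C1 = real (Suc (2*k) choose k)"
  define B1 where "B1 = b (Suc k)"
  define B0 where "B0 = b k"
  have e: "2 * Suc k = Suc (Suc (2*k))" by simp
  have "Suc (Suc (2*k)) * (Suc (2*k) choose k) = (Suc (Suc (2*k)) choose Suc k) * Suc k"
    by (rule Suc_times_binomial_eq)
  then have "real (Suc (Suc (2*k)) * (Suc (2*k) choose k)) = real ((Suc (Suc (2*k)) choose Suc k) * Suc k)"
    by (simp only:)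
  moreover have B1': "B1 = real (Suc (Suc (2*k)) choose Suc k)" unfolding B1_def e ..
  ultimately have r1: "(2 * real k + 2) * C1 = B1 * (real k + 1)"
    unfolding of_nat_mult C1_def[symmetric] B1'[symmetric] by (simp add: algebra_simps)
  have "Suc (2*k) * (2*k choose k) = (Suc (2*k) choose Suc k) * Suc k"
    by (rule Suc_times_binomial_eq)
  moreover have "Suc (2*k) choose Suc k = Suc (2*k) choose k"
    using binomial_symmetric[of k "Suc (2*k)"] by (simp add: Suc_diff_le del: binomial_Suc_Suc)
  ultimately have "Suc (2*k) * (2*k choose k) = (Suc (2*k) choose k) * Suc k" by (simp only:)
  then have "real (Suc (2*k) * (2*k choose k)) = real ((Suc (2*k) choose k) * Suc k)"
    by (simp only:)
  then have r2: "(2 * real k + 1) * B0 = C1 * (real k + 1)"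
    unfolding of_nat_mult C1_def[symmetric] B0_def[symmetric] by (simp add: algebra_simps)
  have k1: "real k + 1 \<noteq> 0" by simp
  from r1 have "(real k + 1) * B1 = (real k + 1) * (2 * C1)" by (simp add: algebra_simps)
  then have "B1 = 2 * C1" using k1 by simp
  with r2 k1 have "B1 = B0 * (2 * (2 * real k + 1)) / (real k + 1)" by (simp add: field_simps)
  then show ?thesis unfolding B1_def B0_def .
qed

lemma gchoose_rec: "(a::real) gchoose (Suc k) = (a gchoose k) * (a - real k) / (real k + 1)"
proof -
  have "fact (Suc k) * (a gchoose Suc k) = (\<Prod>i = 0..<Suc k. a - of_nat i)" by (rule gbinomial_mult_fact)
  also have "\<dots> = (\<Prod>i = 0..<k. a - of_nat i) * (a - real k)" by simp
  also have "(\<Prod>i = 0..<k. a - of_nat i) = fact k * (a gchoose k)" by (rule gbinomial_mult_fact[symmetric])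
  finally have h: "fact (Suc k) * (a gchoose Suc k) = fact k * (a gchoose k) * (a - real k)" .
  have "fact k * ((real k + 1) * (a gchoose Suc k)) = fact k * ((a gchoose k) * (a - real k))"
    using h unfolding fact_Suc by (simp add: algebra_simps)
  then have "(real k + 1) * (a gchoose Suc k) = (a gchoose k) * (a - real k)" by simp
  then show ?thesis by (simp add: field_simps)
qed

lemma gchoose_half: "((-1/2::real) gchoose k) = (-1/4)^k * b k"
proof (induction k)
  case 0 then show ?case by simp
next
  case (Suc k)
  show ?case unfolding gchoose_rec Suc bsuc by (simp add: field_simps)
qed

lemma vandermonde_b: "(\<Sum>k=0..n. b k * b (n - k)) = 4 ^ n"
proof -
  have "(\<Sum>k=0..n. ((-1/2::real) gchoose k) * ((-1/2) gchoose (n - k))) = ((-1/2) + (-1/2)) gchoose n"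
    by (rule gbinomial_Vandermonde)
  also have "((-1/2::real) + (-1/2)) gchoose n = (-1)^n"
    using gbinomial_minus[of "1::real" n] by (simp add: binomial_gbinomial[symmetric])
  moreover have "(\<Sum>k=0..n. ((-1/2::real) gchoose k) * ((-1/2) gchoose (n - k))) = (\<Sum>k=0..n. (-1/4)^n * (b k * b (n - k)))"
  proof (rule sum.cong[OF refl])
    fix k assume "k \<in> {0..n}"
    then have p: "(-1/4::real)^k * (-1/4)^(n-k) = (-1/4)^n" by (simp add: power_add[symmetric])
    show "((-1/2::real) gchoose k) * ((-1/2) gchoose (n - k)) = (-1/4)^n * (b k * b (n - k))"
      unfolding gchoose_half p[symmetric] by (simp only: mult_ac)
  qed
  ultimately have "(\<Sum>k=0..n. (-1/4)^n * (b k * b (n - k))) = (-1)^n" by simp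
  then have "(-1/4)^n * (\<Sum>k=0..n. b k * b (n - k)) = (-1)^n"
    by (simp add: sum_distrib_left)
  then have a1: "(-1/4::real)^n * (\<Sum>k=0..n. b k * b (n - k)) = (-1)^n * 1" by simp
  have a2: "(-1/4::real)^n * 4^n = (-1)^n * 1" by (simp add: power_mult_distrib[symmetric])
  have "(-1/4::real)^n \<noteq> 0" by simp
  moreover have "(-1/4::real)^n * (\<Sum>k=0..n. b k * b (n - k)) = (-1/4::real)^n * 4^n"
    unfolding a1 a2 ..
  ultimately show ?thesis by (simp only: mult_cancel_left) simp
qed

definition u :: "real fps" where "u = Abs_fps b"
definition v :: "real fps" where "v = Abs_fps (\<lambda>n. 4 ^ n)"
definition w :: "real fps" where "w = Abs_fps (\<lambda>n. (2 * real n + 1) * b n)"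
definition Y :: "real fps" where "Y = 1 - 4 * fps_X"

lemma Ynth: "(f * Y) $ n = f $ n - (if n = 0 then 0 else 4 * f $ (n - 1))"
proof -
  have "f * Y = f - fps_const 4 * (fps_X * f)" by (simp add: Y_def algebra_simps numeral_fps_const)
  then show ?thesis by simp
qed

lemma uu: "u * u = v"
  by (rule fps_ext) (simp add: u_def v_def fps_mult_nth vandermonde_b)

lemma vY: "v * Y = 1"
proof (rule fps_ext)
  fix n show "(v * Y) $ n = 1 $ n"
    unfolding Ynth by (cases n) (simp_all add: v_def)
qed

lemma wY: "w * Y = u"
proof (rule fps_ext)
  fix n show "(w * Y) $ n = u $ n"
  proof (cases n)
    case 0 then show ?thesis unfolding Ynth by (simp add: w_def u_def)
  next
    case (Suc k)
    have "(2 * real (Suc k) + 1) * b (Suc k) - 4 * ((2 * real k + 1) * b k) = b (Suc k)"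
      unfolding bsuc by (simp add: field_simps)
    then show ?thesis unfolding Ynth using Suc by (simp add: w_def u_def)
  qed
qed

definition s :: "real fps" where "s = 1 - 2 * cat"

lemma cat0: "cat $ 0 = 0" by (simp add: cat_def)

lemma ss: "s * s = Y"
  using cat_eq unfolding s_def Y_def by algebra

lemma su: "s * u = 1"
proof -
  have "(s * u) * (s * u) = (s * s) * (u * u)" by (simp add: algebra_simps)
  also have "\<dots> = 1" unfolding ss uu using vY by (simp add: mult.commute)
  finally have "(s * u - 1) * (s * u + 1) = 0" by (simp add: algebra_simps)
  moreover have "(s * u + 1) $ 0 \<noteq> 0"
    by (simp add: s_def u_def cat0 numeral_fps_const)
  then have "s * u + 1 \<noteq> 0" by (metis fps_zero_nth)
  ultimately show ?thesis by simp
qed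

lemma L1_sol: "2 * L1 = fps_X * (u + 1)"
  using L1_eq su unfolding s_def by algebra

lemma cat2: "2 * cat = 1 - s" by (simp add: s_def)

lemma HH_sol: "4 * HH = fps_X * (v - 1)"
proof -
  have h1: "HH * s = L1 * cat" using HH_eq unfolding s_def by algebra
  have "4 * HH = 4 * HH * (s * u)" by (simp add: su)
  also have "\<dots> = u * (2 * L1) * (2 * cat)" using h1 by (simp add: algebra_simps)
  also have "\<dots> = fps_X * (u + 1) * (u - s * u)" unfolding L1_sol cat2 by (simp add: algebra_simps)
  also have "\<dots> = fps_X * (u * u - 1)" unfolding su by (simp add: algebra_simps)
  finally show ?thesis unfolding uu .
qed

lemma vu: "v * u = w"
proof -
  have "(v * u - w) * Y = u * (v * Y) - w * Y" by (simp add: algebra_simps)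
  also have "\<dots> = 0" by (simp add: vY wY)
  finally have "(v * u - w) * Y = 0" .
  moreover have "Y \<noteq> 0"
  proof
    assume "Y = 0" then have "Y $ 0 = 0" by simp
    then show False by (simp add: Y_def numeral_fps_const)
  qed
  ultimately show ?thesis by simp
qed

lemma DD_sol: "8 * DD = fps_X * (w + v - u - 1)"
proof -
  have h1: "DD * s = (HH + L1) * cat" using DD_eq unfolding s_def by algebra
  have "8 * DD = 8 * DD * (s * u)" by (simp add: su)
  also have "\<dots> = 8 * u * (DD * s)" by (simp add: algebra_simps)
  also have "\<dots> = 8 * u * ((HH + L1) * cat)" unfolding h1 ..
  also have "\<dots> = u * (4 * HH + 2 * (2 * L1)) * (2 * cat)" by (simp add: algebra_simps)
  also have "\<dots> = fps_X * (v - 1 + 2 * (u + 1)) * (u - s * u)"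
    unfolding L1_sol HH_sol cat2 by (simp add: algebra_simps)
  also have "\<dots> = fps_X * (v * u + 2 * (u * u) - v - u - 1)" unfolding su by (simp add: algebra_simps)
  finally show ?thesis unfolding uu vu by (simp add: algebra_simps)
qed

lemma HH_nth: "HH $ (m + 2) = 4 ^ m"
proof -
  have "(4 * HH) $ (m+2) = (fps_X * (v - 1)) $ (m+2)" by (simp only: HH_sol)
  then have "4 * HH $ (m+2) = 4 ^ Suc m" by (simp add: numeral_fps_const v_def)
  then show ?thesis by simp
qed

lemma DD_nth: "DD $ (m + 2) = (2 * real m + 1) * b m / 2 + 4 ^ m / 2"
proof -
  define B1 where "B1 = b (Suc m)"
  define B0 where "B0 = b m"
  have k: "real m + 1 \<noteq> 0" by simp
  have bs: "(real m + 1) * B1 = B0 * (2 * (2 * real m + 1))"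
    unfolding B1_def B0_def bsuc using k by (simp add: field_simps)
  have "(8 * DD) $ (m+2) = (fps_X * (w + v - u - 1)) $ (m+2)" by (simp only: DD_sol)
  then have "8 * DD $ (m+2) = (2 * real (Suc m) + 1) * B1 + 4 ^ Suc m - B1"
    unfolding B1_def by (simp add: numeral_fps_const v_def w_def u_def)
  also have "\<dots> = 2 * ((real m + 1) * B1) + 4 * 4 ^ m" by (simp add: algebra_simps)
  also have "\<dots> = 4 * (2 * real m + 1) * B0 + 4 * 4 ^ m" unfolding bs by (simp add: algebra_simps)
  finally have "8 * DD $ (m+2) = 4 * (2 * real m + 1) * B0 + 4 * 4 ^ m" .
  then show ?thesis unfolding B0_def[symmetric] by (simp add: field_simps)
qed

lemma sum_card: "real (\<Sum>t\<in>trees_of_size n. card (anc_leaf_pairs t)) = HH $ n"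
  by (simp add: HH_def ser_nth card_ALP)

lemma sum_dist: "real (\<Sum>t\<in>trees_of_size n. \<Sum>(u, l)\<in>anc_leaf_pairs t. tdist u l) = DD $ n"
  unfolding DD_def ser_nth by (subst of_nat_sum) (rule sum.cong[OF refl], rule dist_ALP)

lemma dfact_even: "dfact (2 * m) = 2 ^ m * fact m"
  by (induction m) (simp_all add: algebra_simps)

lemma dfact_odd: "dfact (2 * m + 1) * (2 ^ m * fact m) = fact (2 * m + 1)"
proof (induction m)
  case 0 then show ?case by simp
next
  case (Suc m)
  have e: "2 * Suc m + 1 = Suc (Suc (2 * m + 1))" by simp
  have "dfact (2 * Suc m + 1) * (2 ^ Suc m * fact (Suc m))
      = (2 * m + 3) * (2 * m + 2) * (dfact (2 * m + 1) * (2 ^ m * fact m))"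
    unfolding e by (simp add: algebra_simps)
  also have "\<dots> = fact (2 * Suc m + 1)" unfolding Suc e by (simp add: algebra_simps)
  finally show ?case .
qed

lemma b_fact: "b m = fact (2 * m) / (fact m * fact m)"
  by (subst binomial_fact) auto

lemma dfact_ratio: "real (dfact (2 * m + 1)) / real (dfact (2 * m)) = (2 * real m + 1) * b m / 4 ^ m"
proof -
  have o: "real (dfact (2 * m + 1)) * (2 ^ m * fact m) = fact (2 * m + 1)"
    using arg_cong[OF dfact_odd[of m], of real] by (simp add: algebra_simps)
  have e: "real (dfact (2 * m)) = 2 ^ m * fact m" by (simp add: dfact_even)
  have f: "(fact (2 * m + 1) :: real) = (2 * real m + 1) * fact (2 * m)" by simp
  have "(4::real) ^ m = 2 ^ m * 2 ^ m" by (simp add: power_mult_distrib[symmetric])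
  then show ?thesis unfolding e b_fact using o f by (simp add: field_simps)
qed

lemma parts123:
  assumes "n \<ge> 2"
  shows "(\<Sum>t\<in>trees_of_size n. card (anc_leaf_pairs t)) = 4 ^ (n - 2)
   \<and> real (\<Sum>t\<in>trees_of_size n. \<Sum>(u, l)\<in>anc_leaf_pairs t. tdist u l)
       = fact (2 * n - 3) / (2 * (fact (n - 2))\<^sup>2) + 4 ^ (n - 2) / 2
   \<and> real (\<Sum>t\<in>trees_of_size n. \<Sum>(u, l)\<in>anc_leaf_pairs t. tdist u l)
       / real (\<Sum>t\<in>trees_of_size n. card (anc_leaf_pairs t))
       = real (dfact (2 * n - 3)) / (2 * real (dfact (2 * n - 4))) + 1 / 2"
proof -
  obtain m where n: "n = m + 2" using assms by (metis add.commute le_Suc_ex)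
  have e1: "2 * n - 3 = 2 * m + 1" "2 * n - 4 = 2 * m" "n - 2 = m" using n by auto
  have A: "real (\<Sum>t\<in>trees_of_size n. card (anc_leaf_pairs t)) = 4 ^ m"
    unfolding sum_card n HH_nth ..
  then have "real (\<Sum>t\<in>trees_of_size n. card (anc_leaf_pairs t)) = real ((4::nat) ^ m)" by simp
  then have A': "(\<Sum>t\<in>trees_of_size n. card (anc_leaf_pairs t)) = 4 ^ (n - 2)"
    unfolding e1 by (simp only: of_nat_eq_iff)
  have D: "real (\<Sum>t\<in>trees_of_size n. \<Sum>(u, l)\<in>anc_leaf_pairs t. tdist u l) = (2 * real m + 1) * b m / 2 + 4 ^ m / 2"
    unfolding sum_dist n DD_nth ..
  have f: "(fact (2 * m + 1) :: real) = (2 * real m + 1) * fact (2 * m)" by simp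
  have D': "(2 * real m + 1) * b m / 2 = fact (2 * m + 1) / (2 * (fact m)\<^sup>2)"
    unfolding f b_fact by (simp add: power2_eq_square)
  have R: "((2 * real m + 1) * b m / 2 + 4 ^ m / 2) / 4 ^ m = real (dfact (2 * n - 3)) / (2 * real (dfact (2 * n - 4))) + 1 / 2"
  proof -
    have "real (dfact (2 * n - 3)) / (2 * real (dfact (2 * n - 4))) = (2 * real m + 1) * b m / 4 ^ m / 2"
      unfolding e1 using dfact_ratio[of m] by (simp add: field_simps)
    then show ?thesis by (simp add: field_simps)
  qed
  have P2: "real (\<Sum>t\<in>trees_of_size n. \<Sum>(u, l)\<in>anc_leaf_pairs t. tdist u l)
       = fact (2 * n - 3) / (2 * (fact (n - 2))\<^sup>2) + 4 ^ (n - 2) / 2"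
    unfolding D D' e1 ..
  have P3: "real (\<Sum>t\<in>trees_of_size n. \<Sum>(u, l)\<in>anc_leaf_pairs t. tdist u l)
       / real (\<Sum>t\<in>trees_of_size n. card (anc_leaf_pairs t))
       = real (dfact (2 * n - 3)) / (2 * real (dfact (2 * n - 4))) + 1 / 2"
    unfolding D A by (rule R)
  show ?thesis using A' P2 P3 by blast
qed

definition wl :: "nat \<Rightarrow> real" where "wl m = b m / 4 ^ m"

lemma wl_pos: "wl m > 0"
  unfolding wl_def by (simp add: zero_less_binomial)

lemma aux_frac: "(X::real) > 0 \<Longrightarrow> B * (2 * (2 * real k + 1)) / (real k + 1) / (4 * X) = B / X * (2 * real k + 1) / (2 * real k + 2)"
proof -
  assume X: "X > 0"
  have d1: "(real k + 1) * (4 * X) \<noteq> 0" using X by simp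
  have d2: "X * (2 * real k + 2) \<noteq> 0" using X by (simp add: add_pos_nonneg)
  have "B * (2 * (2 * real k + 1)) / (real k + 1) / (4 * X) = (B * (2 * (2 * real k + 1))) / ((real k + 1) * (4 * X))"
    by (simp add: divide_divide_eq_left)
  also have "\<dots> = (B * (2 * real k + 1)) / (X * (2 * real k + 2))"
    using d1 d2 by (subst frac_eq_eq) (simp_all add: algebra_simps)
  also have "\<dots> = B / X * (2 * real k + 1) / (2 * real k + 2)" by simp
  finally show ?thesis .
qed

lemma wl_suc: "wl (Suc m) = wl m * (2 * real m + 1) / (2 * real m + 2)"
  unfolding wl_def bsuc power_Suc by (rule aux_frac) simp

lemma wl_suc': "(2 * real m + 2) * wl (Suc m) = (2 * real m + 1) * wl m"
proof -
  have "(2 * real m + 2) \<noteq> 0" by (simp add: add_pos_nonneg)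
  then show ?thesis unfolding wl_suc by simp
qed

definition P :: "nat \<Rightarrow> real" where "P n = (\<Prod>k=1..n. (4*real k^2) / (4*real k^2 - 1))"

lemma P_Suc: "P (Suc m) = P m * (4 * (real m + 1)^2 / (4 * (real m + 1)^2 - 1))"
  unfolding P_def by (simp add: add.commute)

lemma den_pos: "k \<ge> 1 \<Longrightarrow> 4 * real k^2 - 1 > 0"
proof -
  assume "k \<ge> 1"
  then have "real k ^ 2 \<ge> 1" by (simp add: one_le_power)
  then show ?thesis by linarith
qed

lemma P_eq: "P m * ((2 * real m + 1) * (wl m)^2) = 1"
proof (induction m)
  case 0 then show ?case by (simp add: P_def wl_def)
next
  case (Suc m)
  define x where "x = wl m"
  define y where "y = wl (Suc m)"
  define d where "d = 2 * real m + 2"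
  define e where "e = 2 * real m + 1"
  have e: "e > 0" unfolding e_def by (simp add: add_pos_nonneg)
  have e3: "2 * real m + 3 > 0" by (simp add: add_pos_nonneg)
  have dy: "d * y = e * x" unfolding d_def e_def x_def y_def by (rule wl_suc')
  have dy2: "d^2 * y^2 = e^2 * x^2" by (metis dy power_mult_distrib)
  have den: "4 * (real m + 1)^2 - 1 = e * (2 * real m + 3)" unfolding e_def by (simp add: algebra_simps power2_eq_square)
  have d2: "4 * (real m + 1)^2 = d^2" unfolding d_def by (simp add: algebra_simps power2_eq_square)
  have f: "4 * (real m + 1)^2 / (4 * (real m + 1)^2 - 1) * (2 * real m + 3) = d^2 / e"
  proof -
    have f0: "4 * (real m + 1)^2 / (4 * (real m + 1)^2 - 1) = d^2 / (e * (2 * real m + 3))"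
      by (subst den, subst d2, rule refl)
    show ?thesis unfolding f0 using e e3 by simp
  qed
  have "P (Suc m) * ((2 * real (Suc m) + 1) * y^2) = P m * (4 * (real m + 1)^2 / (4 * (real m + 1)^2 - 1) * (2 * real m + 3)) * y^2"
    unfolding P_Suc by (simp add: algebra_simps)
  also have "\<dots> = P m * (d^2 * y^2) / e" unfolding f by simp
  also have "\<dots> = P m * (e * x^2)" unfolding dy2 using e by (simp add: power2_eq_square)
  finally show ?case using Suc unfolding x_def y_def e_def by simp
qed

lemma P_lim: "P \<longlonglongrightarrow> pi / 2"
  unfolding P_def by (rule wallis)

lemma P_nonneg: "P m \<ge> 0"
  unfolding P_def by (intro prod_nonneg) (auto intro!: divide_nonneg_pos den_pos)

lemma P_inc: "incseq P"
proof (rule incseq_SucI)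
  fix m
  have d: "4 * (real m + 1)^2 - 1 > 0" using den_pos[of "Suc m"] by (simp add: add.commute)
  then have "4 * (real m + 1)^2 / (4 * (real m + 1)^2 - 1) \<ge> 1"
    by (simp add: le_divide_eq)
  then show "P m \<le> P (Suc m)" unfolding P_Suc using P_nonneg[of m]
    by (metis mult_left_mono mult.right_neutral)
qed

lemma wl_lower: "(2 * real m + 1) * (wl m)^2 \<ge> 2 / pi"
proof -
  have "P m \<le> pi / 2" by (rule incseq_le[OF P_inc P_lim])
  moreover have A: "(2 * real m + 1) * (wl m)^2 > 0" using wl_pos[of m] by simp
  moreover have "P m = 1 / ((2 * real m + 1) * (wl m)^2)"
    using P_eq[of m] A by (subst nonzero_eq_divide_eq) auto
  ultimately show ?thesis using pi_gt_zero by (simp add: field_simps)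
qed

definition Q :: "nat \<Rightarrow> real" where "Q m = 1 / ((2 * real m + 2) * (wl (Suc m))^2)"

lemma Q_alt: "Q m = P (Suc m) * ((2 * real m + 3) / (2 * real m + 2))"
proof -
  define x where "x = wl (Suc m)"
  have x: "x > 0" unfolding x_def by (rule wl_pos)
  have A: "(2 * real m + 3) * x^2 > 0" using x by (simp add: add_pos_nonneg)
  have "P (Suc m) * ((2 * real m + 3) * x^2) = 1"
    using P_eq[of "Suc m"] unfolding x_def by (simp add: algebra_simps)
  then have Pv: "P (Suc m) = 1 / ((2 * real m + 3) * x^2)"
    using A by (subst nonzero_eq_divide_eq) auto
  have d2: "2 * real m + 2 \<noteq> 0" by (simp add: add_pos_nonneg)
  have d3: "((2 * real m + 3) * x^2) * (2 * real m + 2) \<noteq> 0" using A d2 x by simp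
  have d4: "(2 * real m + 2) * x^2 \<noteq> 0" using x d2 by simp
  have "P (Suc m) * ((2 * real m + 3) / (2 * real m + 2)) = ((2 * real m + 3)) / (((2 * real m + 3) * x^2) * (2 * real m + 2))"
    unfolding Pv by simp
  also have "\<dots> = 1 / ((2 * real m + 2) * x^2)"
    by (subst frac_eq_eq[OF d3 d4]) (simp add: algebra_simps)
  finally show ?thesis unfolding Q_def x_def by simp
qed

lemma Q_lim: "Q \<longlonglongrightarrow> pi / 2"
proof -
  have "(\<lambda>m. (2 * real m + 3) / (2 * real m + 2)) \<longlonglongrightarrow> 1" by real_asymp
  then have "(\<lambda>m. P (Suc m) * ((2 * real m + 3) / (2 * real m + 2))) \<longlonglongrightarrow> pi / 2 * 1"
    by (intro tendsto_mult LIMSEQ_Suc P_lim)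
  then show ?thesis unfolding Q_alt[abs_def] by simp
qed

lemma Q_dec: "decseq Q"
proof (rule decseq_SucI)
  fix m
  define x where "x = wl (Suc m)"
  define y where "y = wl (Suc (Suc m))"
  define a where "a = 2 * real m + 2"
  define c where "c = 2 * real m + 4"
  have x: "x > 0" unfolding x_def by (rule wl_pos)
  have y: "y > 0" unfolding y_def by (rule wl_pos)
  have a: "a > 0" unfolding a_def by (simp add: add_pos_nonneg)
  have c: "c > 0" unfolding c_def by (simp add: add_pos_nonneg)
  have h: "c * y = (2 * real m + 3) * x"
    using wl_suc'[of "Suc m"] unfolding x_def y_def c_def by (simp add: algebra_simps)
  have ca: "c * a \<le> (2 * real m + 3)^2" unfolding a_def c_def by (simp add: power2_eq_square algebra_simps)
  have "c * (a * x^2) = (c * a) * x^2" by simp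
  also have "\<dots> \<le> (2 * real m + 3)^2 * x^2" using ca by (simp add: mult_right_mono)
  also have "\<dots> = (c * y)^2" unfolding h by (simp add: power_mult_distrib)
  also have "\<dots> = c * (c * y^2)" by (simp add: power2_eq_square)
  finally have "a * x^2 \<le> c * y^2" using c by simp
  moreover have "0 < (c * y^2) * (a * x^2)" using a c x y by simp
  ultimately have "1 / (c * y^2) \<le> 1 / (a * x^2)" by (intro divide_left_mono) simp_all
  moreover have "Q (Suc m) = 1 / (c * y^2)" unfolding Q_def c_def y_def by (simp add: algebra_simps)
  moreover have "Q m = 1 / (a * x^2)" unfolding Q_def a_def x_def ..
  ultimately show "Q (Suc m) \<le> Q m" by simp
qed

lemma wl_upper: "m \<ge> 1 \<Longrightarrow> (wl m)^2 \<le> 1 / (pi * real m)"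
proof -
  assume "m \<ge> 1"
  then obtain k where m: "m = Suc k" by (cases m) auto
  define A where "A = (2 * real k + 2) * (wl m)^2"
  have A: "A > 0" unfolding A_def using wl_pos[of m] by (simp add: add_pos_nonneg)
  have "pi / 2 \<le> Q k" by (rule decseq_ge[OF Q_dec Q_lim])
  then have "pi / 2 \<le> 1 / A" unfolding Q_def m A_def .
  then have "pi / 2 * A \<le> 1" using A by (simp add: le_divide_eq)
  then have "(wl m)^2 * (pi * real m) \<le> 1" unfolding A_def m by (simp add: algebra_simps)
  moreover have "pi * real m > 0" using m by simp
  ultimately show ?thesis by (simp add: pos_le_divide_eq)
qed

lemma key_bound:
  assumes m: "m \<ge> 1"
  shows "\<bar>(2 * real m + 1) * wl m / 2 - sqrt ((real m + 2) / pi)\<bar> \<le> 1 / sqrt (real m + 2)"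
proof -
  define a where "a = (2 * real m + 1) * wl m / 2"
  define S where "S = sqrt ((real m + 2) / pi)"
  define T where "T = sqrt (real m + 2)"
  have pi0: "pi > 0" by simp
  have a0: "a \<ge> 0" unfolding a_def using wl_pos[of m] by simp
  have T0: "T > 0" unfolding T_def by simp
  have S2: "S^2 = (real m + 2) / pi" unfolding S_def using pi0 by simp
  have a2: "a^2 = (2 * real m + 1) / 4 * ((2 * real m + 1) * (wl m)^2)"
    unfolding a_def by (simp add: power2_eq_square)
  have lo: "a^2 \<ge> (2 * real m + 1) / 4 * (2 / pi)"
    unfolding a2 by (rule mult_left_mono[OF wl_lower]) simp
  have up0: "(wl m)^2 \<le> 1 / (pi * real m)" using wl_upper m by simp
  have "a^2 \<le> (2 * real m + 1) / 4 * ((2 * real m + 1) * (1 / (pi * real m)))"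
    unfolding a2 by (intro mult_left_mono up0) simp_all
  also have "\<dots> = (2 * real m + 1)^2 / (4 * real m) / pi" by (simp add: power2_eq_square)
  also have "\<dots> \<le> (real m + 2) / pi"
  proof (rule divide_right_mono)
    have "real m \<ge> 1" using m by simp
    then have "(2 * real m + 1)^2 \<le> (real m + 2) * (4 * real m)" by (simp add: power2_eq_square algebra_simps)
    moreover have "4 * real m > 0" using m by simp
    ultimately show "(2 * real m + 1)^2 / (4 * real m) \<le> real m + 2" by (simp add: divide_le_eq)
  qed (use pi0 in simp)
  finally have up: "a^2 \<le> (real m + 2) / pi" .
  then have aS: "a \<le> S" unfolding S_def by (rule real_le_rsqrt)
  have "(S - a) * (S + a) = S^2 - a^2" by (simp add: power2_eq_square algebra_simps)
  also have "\<dots> \<le> (real m + 2) / pi - (2 * real m + 1) / 4 * (2 / pi)" using lo S2 by simp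
  also have "\<dots> = 3 / (2 * pi)" by (simp add: field_simps)
  also have "\<dots> \<le> 1 / 2" using pi_gt3 by (simp add: field_simps)
  finally have h1: "(S - a) * (S + a) \<le> 1 / 2" .
  have sp: "sqrt pi \<le> 2"
  proof -
    have "sqrt pi \<le> sqrt (2^2)" by (rule real_sqrt_le_mono) (use pi_less_4 in simp)
    then show ?thesis by (simp only: real_sqrt_abs abs_numeral)
  qed
  have sp0: "sqrt pi > 0" by simp
  have ST: "S = T / sqrt pi" unfolding S_def T_def by (simp add: real_sqrt_divide)
  have "T / 2 \<le> S" unfolding ST using sp sp0 T0 by (intro divide_left_mono) auto
  then have "(S - a) * (T / 2) \<le> (S - a) * (S + a)"
    using aS a0 by (intro mult_left_mono) simp_all
  with h1 have "(S - a) * T \<le> 1" by simp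
  then have "S - a \<le> 1 / T" using T0 by (simp add: pos_le_divide_eq)
  then show ?thesis using aS unfolding a_def[symmetric] S_def[symmetric] T_def[symmetric] by simp
qed

lemma bigo_part:
  "(\<lambda>n. real (\<Sum>t\<in>trees_of_size n. \<Sum>(u, l)\<in>anc_leaf_pairs t. tdist u l)
              / real (\<Sum>t\<in>trees_of_size n. card (anc_leaf_pairs t))
             - sqrt (real n / pi) - 1 / 2)
         \<in> O(\<lambda>n. 1 / sqrt (real n))"
proof (rule bigoI[where c = 1])
  show "\<forall>\<^sub>F n in at_top. norm (real (\<Sum>t\<in>trees_of_size n. \<Sum>(u, l)\<in>anc_leaf_pairs t. tdist u l)
              / real (\<Sum>t\<in>trees_of_size n. card (anc_leaf_pairs t))
             - sqrt (real n / pi) - 1 / 2) \<le> 1 * norm (1 / sqrt (real n))"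
  proof (rule eventually_at_top_linorderI[of 3])
    fix n :: nat assume n3: "n \<ge> 3"
    obtain m where n: "n = m + 2" and m: "m \<ge> 1" using n3 by (metis add.commute le_Suc_ex le_add2 add_le_imp_le_right numeral_3_eq_3 numeral_2_eq_2 one_add_one Suc_eq_plus1 add_Suc_right)
    have e1: "2 * n - 3 = 2 * m + 1" "2 * n - 4 = 2 * m" using n by auto
    have r: "real (dfact (2 * n - 3)) / (2 * real (dfact (2 * n - 4))) = (2 * real m + 1) * wl m / 2"
    proof -
      have "real (dfact (2 * m + 1)) / (2 * real (dfact (2 * m))) = (real (dfact (2 * m + 1)) / real (dfact (2 * m))) / 2"
        by simp
      also have "\<dots> = (2 * real m + 1) * wl m / 2" unfolding dfact_ratio wl_def by simp
      finally show ?thesis unfolding e1 .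
    qed
    have rn: "real n = real m + 2" using n by simp
    have eq: "real (\<Sum>t\<in>trees_of_size n. \<Sum>(u, l)\<in>anc_leaf_pairs t. tdist u l)
              / real (\<Sum>t\<in>trees_of_size n. card (anc_leaf_pairs t))
             - sqrt (real n / pi) - 1 / 2 = (2 * real m + 1) * wl m / 2 - sqrt ((real m + 2) / pi)"
    proof -
      have n2: "n \<ge> 2" using n3 by simp
      have p3: "real (\<Sum>t\<in>trees_of_size n. \<Sum>(u, l)\<in>anc_leaf_pairs t. tdist u l)
       / real (\<Sum>t\<in>trees_of_size n. card (anc_leaf_pairs t))
       = real (dfact (2 * n - 3)) / (2 * real (dfact (2 * n - 4))) + 1 / 2"
        using parts123[OF n2] by blast
      show ?thesis unfolding p3 r rn by simp
    qed
    show "norm (real (\<Sum>t\<in>trees_of_size n. \<Sum>(u, l)\<in>anc_leaf_pairs t. tdist u l)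
              / real (\<Sum>t\<in>trees_of_size n. card (anc_leaf_pairs t))
             - sqrt (real n / pi) - 1 / 2) \<le> 1 * norm (1 / sqrt (real n))"
      unfolding eq unfolding rn using key_bound[OF m] by simp
  qed
qed

theorem mainTheorem9:
  shows "(\<forall>n\<ge>2.
     (\<Sum>t\<in>trees_of_size n. card (anc_leaf_pairs t)) = 4 ^ (n - 2)
   \<and> real (\<Sum>t\<in>trees_of_size n. \<Sum>(u, l)\<in>anc_leaf_pairs t. tdist u l)
       = fact (2 * n - 3) / (2 * (fact (n - 2))\<^sup>2) + 4 ^ (n - 2) / 2
   \<and> real (\<Sum>t\<in>trees_of_size n. \<Sum>(u, l)\<in>anc_leaf_pairs t. tdist u l)
       / real (\<Sum>t\<in>trees_of_size n. card (anc_leaf_pairs t))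
       = real (dfact (2 * n - 3)) / (2 * real (dfact (2 * n - 4))) + 1 / 2)
   \<and> (\<lambda>n. real (\<Sum>t\<in>trees_of_size n. \<Sum>(u, l)\<in>anc_leaf_pairs t. tdist u l)
              / real (\<Sum>t\<in>trees_of_size n. card (anc_leaf_pairs t))
             - sqrt (real n / pi) - 1 / 2)
         \<in> O(\<lambda>n. 1 / sqrt (real n))"
  using parts123 bigo_part by blast

end
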